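(* For every integer $k\ge 2$, the Zielonka graph $\vec Z_k$ is splitable: there is an oriented graph $\vec T$ on $k\cdot 2^{k-2}$ vertices such that $\vec Z_k$ is isomorphic to the anti-twinned graph $R(\vec T)$.
   Context: For $k\ge 1$ the Zielonka graph $\vec Z_k$ has vertex set $S_1\cup\dots\cup S_k$, where $S_i$ is the set of $k$-tuples $x=(x^1,\dots,x^k)$ with $x^i=*$ and $x^j\in\{0,1\}$ for $j\neq i$ (so $\vec Z_k$ has $k\cdot 2^{k-1}$ vertices). For $x\in S_i$ and $y\in S_j$ with $i\neq j$, there is an arc $xy$ if and only if either ($i<j$ and $x^j=y^i$) or ($i>j$ and $x^j\neq y^i$); there are no other arcs. Given an oriented graph $\vec T$ with vertex set $\{v_1,\dots,v_n\}$, its anti-twinned graph $R(\vec T)$ is the oriented graph with vertex set $\{v_1,\dots,v_n\}\cup\{v_1',\dots,v_n'\}$ and arc set $\{v_iv_j,\ v_i'v_j',\ v_jv_i',\ v_j'v_i : v_iv_j\text{ an arc of }\vec T\}$. An oriented graph is splitable if it is isomorphic to $R(\vec T)$ for some oriented graph $\vec T$. *)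

theory Defs
  imports Main
begin

definition oriented_graph :: "'a set \<Rightarrow> ('a \<times> 'a) set \<Rightarrow> bool" where
  "oriented_graph V A \<longleftrightarrow> finite V \<and> A \<subseteq> V \<times> V
     \<and> (\<forall>x. (x, x) \<notin> A) \<and> (\<forall>x y. (x, y) \<in> A \<longrightarrow> (y, x) \<notin> A)"

definition digraph_iso :: "'a set \<Rightarrow> ('a \<times> 'a) set \<Rightarrow> 'b set \<Rightarrow> ('b \<times> 'b) set \<Rightarrow> bool" where
  "digraph_iso V1 A1 V2 A2 \<longleftrightarrow> (\<exists>f. bij_betw f V1 V2 \<and>
     (\<forall>x\<in>V1. \<forall>y\<in>V1. (x, y) \<in> A1 \<longleftrightarrow> (f x, f y) \<in> A2))"

text \<open>A k-tuple over {0,1,*} is a list of length k of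
  bool option (None = *); coordinates are indexed 0..k-1 instead of 1..k.\<close>

definition zS :: "nat \<Rightarrow> nat \<Rightarrow> bool option list set" where
  "zS k i = {x. length x = k \<and> x ! i = None \<and> (\<forall>j<k. j \<noteq> i \<longrightarrow> x ! j \<noteq> None)}"

definition zielonka_verts :: "nat \<Rightarrow> bool option list set" where
  "zielonka_verts k = (\<Union>i<k. zS k i)"

definition zielonka_arcs :: "nat \<Rightarrow> (bool option list \<times> bool option list) set" where
  "zielonka_arcs k = {(x, y). \<exists>i<k. \<exists>j<k. i \<noteq> j \<and> x \<in> zS k i \<and> y \<in> zS k j \<and>
      ((i < j \<and> x ! j = y ! i) \<or> (j < i \<and> x ! j \<noteq> y ! i))}"

text \<open>Anti-twinned graph R(T): vertex (v, False) is v, vertex (v, True) is v'.\<close>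

definition anti_twin_verts :: "'a set \<Rightarrow> ('a \<times> bool) set" where
  "anti_twin_verts V = V \<times> UNIV"

definition anti_twin_arcs :: "('a \<times> 'a) set \<Rightarrow> (('a \<times> bool) \<times> ('a \<times> bool)) set" where
  "anti_twin_arcs A =
     {((v, False), (w, False)) | v w. (v, w) \<in> A}
   \<union> {((v, True), (w, True)) | v w. (v, w) \<in> A}
   \<union> {((w, False), (v, True)) | v w. (v, w) \<in> A}
   \<union> {((w, True), (v, False)) | v w. (v, w) \<in> A}"

end

theory Submission
  imports Defs "HOL-Library.Countable"
begin


definition sg :: "bool option list \<Rightarrow> bool option list" where
  "sg x = map (map_option Not) x"

lemma sg_sg[simp]: "sg (sg x) = x"
  by (simp add: sg_def map_idI option.map_comp comp_def option.map_ident)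

lemma sg_len[simp]: "length (sg x) = length x" by (simp add: sg_def)
lemma sg_nth[simp]: "i < length x \<Longrightarrow> sg x ! i = map_option Not (x ! i)" by (simp add: sg_def)

lemma sg_zS[simp]: "i < k \<Longrightarrow> sg x \<in> zS k i \<longleftrightarrow> x \<in> zS k i"
  by (auto simp: zS_def)

lemma zS_uniq: "x \<in> zS k i \<Longrightarrow> x \<in> zS k j \<Longrightarrow> i < k \<Longrightarrow> j < k \<Longrightarrow> i = j"
  by (auto simp: zS_def)

lemma key: "(x, y) \<in> zielonka_arcs k \<longleftrightarrow> (sg y, x) \<in> zielonka_arcs k"
proof
  assume "(x, y) \<in> zielonka_arcs k"
  then obtain i j where ij: "i<k" "j<k" "i\<noteq>j" "x \<in> zS k i" "y \<in> zS k j"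
     "(i < j \<and> x ! j = y ! i) \<or> (j < i \<and> x ! j \<noteq> y ! i)" unfolding zielonka_arcs_def by auto
  have ne: "x ! j \<noteq> None" "y ! i \<noteq> None" "length x = k" "length y = k" using ij by (auto simp: zS_def)
  have "(j < i \<and> sg y ! i = x ! j) \<or> (i < j \<and> sg y ! i \<noteq> x ! j)"
    using ij ne by (auto simp: option.map_sel)
  then show "(sg y, x) \<in> zielonka_arcs k" unfolding zielonka_arcs_def using ij
    apply (simp only: mem_Collect_eq case_prod_conv)
    apply (rule exI[of _ j], simp add: ij ij(3)[symmetric])
    apply (rule exI[of _ i], simp add: ij ij(3)[symmetric])
    done
next
  assume "(sg y, x) \<in> zielonka_arcs k"
  then obtain j i where ij0: "j<k" "i<k" "j\<noteq>i" "sg y \<in> zS k j" "x \<in> zS k i"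
     "(j < i \<and> sg y ! i = x ! j) \<or> (i < j \<and> sg y ! i \<noteq> x ! j)" unfolding zielonka_arcs_def
     by (auto simp del: sg_zS)
  have ij: "i<k" "j<k" "i\<noteq>j" "x \<in> zS k i" "y \<in> zS k j"
     "(j < i \<and> sg y ! i = x ! j) \<or> (i < j \<and> sg y ! i \<noteq> x ! j)" using ij0 by auto
  have ne: "x ! j \<noteq> None" "y ! i \<noteq> None" "length x = k" "length y = k" using ij by (auto simp: zS_def)
  have "(i < j \<and> x ! j = y ! i) \<or> (j < i \<and> x ! j \<noteq> y ! i)"
    using ij ne by (auto simp: option.map_sel)
  then show "(x, y) \<in> zielonka_arcs k" unfolding zielonka_arcs_def using ij
    apply (simp only: mem_Collect_eq case_prod_conv)
    apply (rule exI[of _ i], simp add: ij ij(3)[symmetric])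
    apply (rule exI[of _ j], simp add: ij ij(3)[symmetric])
    done
qed



definition gg :: "nat \<Rightarrow> bool list \<Rightarrow> bool option list" where
  "gg i bs = take i (map Some bs) @ None # drop i (map Some bs)"

definition hh :: "nat \<Rightarrow> bool option list \<Rightarrow> bool list" where
  "hh i x = map the (take i x @ drop (Suc i) x)"

lemma gg_nth: "i \<le> length bs \<Longrightarrow> j \<le> length bs \<Longrightarrow>
   gg i bs ! j = (if j < i then Some (bs ! j) else if j = i then None else Some (bs ! (j - 1)))"
  by (cases "j < i"; cases "j = i") (auto simp: gg_def nth_append min_def nth_Cons')

lemma gg_len[simp]: "i \<le> length bs \<Longrightarrow> length (gg i bs) = Suc (length bs)"
  by (simp add: gg_def)

lemma card_zS: assumes "i < k" shows "card (zS k i) = 2 ^ (k - 1)"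
proof -
  let ?B = "{bs::bool list. set bs \<subseteq> UNIV \<and> length bs = k - 1}"
  have "bij_betw (gg i) ?B (zS k i)"
  proof (rule bij_betw_byWitness[where f' = "hh i"])
    show "\<forall>a\<in>?B. hh i (gg i a) = a"
      using assms by (auto simp: hh_def gg_def map_idI)
    show "\<forall>a'\<in>zS k i. gg i (hh i a') = a'"
    proof
      fix x assume x: "x \<in> zS k i"
      have ne: "\<forall>z\<in>set (take i x @ drop (Suc i) x). z \<noteq> None"
        using x assms by (auto simp: zS_def in_set_conv_nth nth_append min_def)
      hence m: "map Some (hh i x) = take i x @ drop (Suc i) x"
        by (auto simp: hh_def intro!: map_idI)
      have "gg i (hh i x) = take i x @ None # drop (Suc i) x"
        unfolding gg_def m using x assms by (simp add: zS_def min_def)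
      also have "\<dots> = x" using x assms id_take_nth_drop[of i x] by (simp add: zS_def)
      finally show "gg i (hh i x) = x" .
    qed
    show "gg i ` ?B \<subseteq> zS k i"
      using assms by (auto simp: zS_def gg_nth)
    show "hh i ` zS k i \<subseteq> ?B"
      using assms by (auto simp: zS_def hh_def)
  qed
  hence "card (zS k i) = card ?B" by (simp add: bij_betw_same_card)
  also have "\<dots> = 2 ^ (k - 1)" by (subst card_lists_length_eq) auto
  finally show ?thesis .
qed

lemma card_Z: "card (zielonka_verts k) = k * 2 ^ (k - 1)"
proof -
  have fin: "finite (zS k i)" for i
  proof -
    have "zS k i \<subseteq> {x. set x \<subseteq> UNIV \<and> length x = k}" by (auto simp: zS_def)
    thus ?thesis by (rule finite_subset) (rule finite_lists_length_eq, simp)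
  qed
  have "card (zielonka_verts k) = (\<Sum>i<k. card (zS k i))"
    unfolding zielonka_verts_def
    apply (rule card_UN_disjoint)
      apply simp
     apply (simp add: fin)
    apply (auto simp: zS_def)
    done
  also have "\<dots> = k * 2 ^ (k - 1)" by (simp add: card_zS)
  finally show ?thesis .
qed

definition rep :: "bool option list \<Rightarrow> bool" where
  "rep x \<longleftrightarrow> x ! (if x ! 0 = None then 1 else 0) = Some False"

lemma rep_sg: assumes k: "k \<ge> 2" and x: "x \<in> zielonka_verts k" shows "rep (sg x) \<longleftrightarrow> \<not> rep x"
proof -
  obtain i where i: "i < k" "x \<in> zS k i" using x by (auto simp: zielonka_verts_def)
  define c :: nat where "c = (if x ! 0 = None then 1 else 0)"
  have lx: "length x = k" using i by (auto simp: zS_def)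
  have c0: "(if sg x ! 0 = None then 1 else 0) = c" using k lx by (simp add: c_def)
  have ck: "c < k" using k by (simp add: c_def)
  have ci: "c \<noteq> i"
  proof
    assume "c = i"
    show False
    proof (cases "x ! 0 = None")
      case True
      have nn: "\<forall>j<k. j \<noteq> i \<longrightarrow> x ! j \<noteq> None" using i(2) unfolding zS_def by blast
      have "i = 0"
      proof (rule ccontr)
        assume "i \<noteq> 0"
        with nn k have "x ! 0 \<noteq> None" by auto
        with True show False by simp
      qed
      then show False using \<open>c = i\<close> True by (simp add: c_def)
    next
      case False
      then show False using \<open>c = i\<close> i by (auto simp: c_def zS_def split: if_splits)
    qed
  qed
  have "x ! c \<noteq> None" using i ck ci by (auto simp: zS_def)
  then show ?thesis unfolding rep_def c0 using ck lx
    by (auto simp: c_def[symmetric])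
qed

lemma Z_sg: "x \<in> zielonka_verts k \<Longrightarrow> sg x \<in> zielonka_verts k"
  by (auto simp: zielonka_verts_def)

lemma arcs_Z: "(x, y) \<in> zielonka_arcs k \<Longrightarrow> x \<in> zielonka_verts k \<and> y \<in> zielonka_verts k"
  by (auto simp: zielonka_arcs_def zielonka_verts_def)

lemma arcs_irrefl: "(x, x) \<notin> zielonka_arcs k"
  by (auto simp: zielonka_arcs_def zS_def)

lemma arcs_antisym: "(x, y) \<in> zielonka_arcs k \<Longrightarrow> (y, x) \<notin> zielonka_arcs k"
proof
  assume "(x, y) \<in> zielonka_arcs k"
  then obtain i j where ij: "i<k" "j<k" "i\<noteq>j" "x \<in> zS k i" "y \<in> zS k j"
     "(i < j \<and> x ! j = y ! i) \<or> (j < i \<and> x ! j \<noteq> y ! i)" unfolding zielonka_arcs_def by auto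
  assume "(y, x) \<in> zielonka_arcs k"
  then obtain j' i' where ij': "j'<k" "i'<k" "y \<in> zS k j'" "x \<in> zS k i'"
     "(j' < i' \<and> y ! i' = x ! j') \<or> (i' < j' \<and> y ! i' \<noteq> x ! j')" unfolding zielonka_arcs_def by auto
  have "i' = i" "j' = j" using ij ij' zS_uniq by blast+
  then show False using ij ij' by auto
qed

lemma key2: "(x, y) \<in> zielonka_arcs k \<longleftrightarrow> (sg x, sg y) \<in> zielonka_arcs k"
  using key[of x y k] key[of "sg y" x k] by simp

lemma AT_FF: "((a,False),(b,False)) \<in> anti_twin_arcs A \<longleftrightarrow> (a,b) \<in> A"
  by (auto simp: anti_twin_arcs_def)
lemma AT_TT: "((a,True),(b,True)) \<in> anti_twin_arcs A \<longleftrightarrow> (a,b) \<in> A"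
  by (auto simp: anti_twin_arcs_def)
lemma AT_FT: "((a,False),(b,True)) \<in> anti_twin_arcs A \<longleftrightarrow> (b,a) \<in> A"
  by (auto simp: anti_twin_arcs_def)
lemma AT_TF: "((a,True),(b,False)) \<in> anti_twin_arcs A \<longleftrightarrow> (b,a) \<in> A"
  by (auto simp: anti_twin_arcs_def)

theorem mainTheorem7:
  fixes k :: nat
  assumes "k \<ge> 2"
  shows "\<exists>(V :: nat set) A. oriented_graph V A \<and> card V = k * 2 ^ (k - 2) \<and>
           digraph_iso (zielonka_verts k) (zielonka_arcs k)
                       (anti_twin_verts V) (anti_twin_arcs A)"
proof -
  let ?Z = "zielonka_verts k" and ?ZA = "zielonka_arcs k"
  define R where "R = {x \<in> ?Z. rep x}"
  define e :: "bool option list \<Rightarrow> nat" where "e = to_nat"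
  have einj: "e x = e y \<longleftrightarrow> x = y" for x y by (simp add: e_def)
  define V where "V = e ` R"
  define A where "A = {(e x, e y) | x y. x \<in> R \<and> y \<in> R \<and> (x, y) \<in> ?ZA}"
  have Amem: "(e x, e y) \<in> A \<longleftrightarrow> (x, y) \<in> ?ZA" if "x \<in> R" "y \<in> R" for x y
    using that by (auto simp: A_def einj)
  have finZ: "finite ?Z"
  proof -
    have "?Z \<subseteq> {x. set x \<subseteq> UNIV \<and> length x = k}" by (auto simp: zielonka_verts_def zS_def)
    thus ?thesis by (rule finite_subset) (rule finite_lists_length_eq, simp)
  qed
  have og: "oriented_graph V A"
    unfolding oriented_graph_def
  proof (intro conjI allI impI)
    show "finite V" unfolding V_def R_def using finZ by simp
    show "A \<subseteq> V \<times> V" unfolding A_def V_def by auto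
    show "(x, x) \<notin> A" for x unfolding A_def using arcs_irrefl by (auto simp: einj)
    show "(y, x) \<notin> A" if "(x, y) \<in> A" for x y
      using that arcs_antisym unfolding A_def by (auto simp: einj)
  qed
  define f where "f x = (if rep x then (e x, False) else (e (sg x), True))" for x
  have bij: "bij_betw f ?Z (anti_twin_verts V)"
    unfolding bij_betw_def
  proof
    show "inj_on f ?Z"
    proof (rule inj_onI)
      fix x y assume xy: "x \<in> ?Z" "y \<in> ?Z" "f x = f y"
      show "x = y"
      proof (cases "rep x")
        case True
        then show ?thesis using xy by (auto simp: f_def einj split: if_splits)
      next
        case False
        then have "sg x = sg y" using xy by (auto simp: f_def einj split: if_splits)
        then have "sg (sg x) = sg (sg y)" by simp
        then show ?thesis by simp
      qed
    qed
    show "f ` ?Z = anti_twin_verts V"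
    proof
      show "f ` ?Z \<subseteq> anti_twin_verts V"
        using rep_sg[OF assms] Z_sg
        by (auto simp: f_def anti_twin_verts_def V_def R_def)
    next
      show "anti_twin_verts V \<subseteq> f ` ?Z"
      proof
        fix p assume "p \<in> anti_twin_verts V"
        then obtain r b where p: "p = (e r, b)" "r \<in> R" by (auto simp: anti_twin_verts_def V_def)
        show "p \<in> f ` ?Z"
        proof (cases b)
          case False
          then have "f r = p" using p by (simp add: f_def R_def)
          then show ?thesis using p by (metis (no_types, lifting) R_def image_eqI mem_Collect_eq)
        next
          case True
          have "\<not> rep (sg r)" using p rep_sg[OF assms] by (auto simp: R_def)
          then have "f (sg r) = p" using p True by (simp add: f_def)
          then show ?thesis using p Z_sg[of r k] unfolding R_def by blast
        qed
      qed
    qed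
  qed
  have arcs: "(x, y) \<in> ?ZA \<longleftrightarrow> (f x, f y) \<in> anti_twin_arcs A" if x: "x \<in> ?Z" and y: "y \<in> ?Z" for x y
  proof -
    have sx: "sg x \<in> R" if "\<not> rep x" unfolding R_def using that rep_sg[OF assms x] Z_sg[OF x] by blast
    have sy: "sg y \<in> R" if "\<not> rep y" unfolding R_def using that rep_sg[OF assms y] Z_sg[OF y] by blast
    have rx: "x \<in> R" if "rep x" using that x unfolding R_def by blast
    have ry: "y \<in> R" if "rep y" using that y unfolding R_def by blast
    show ?thesis
    proof (cases "rep x"; cases "rep y")
      assume a: "rep x" "rep y"
      then have "f x = (e x, False)" "f y = (e y, False)" by (simp_all add: f_def)
      then show ?thesis by (simp only: AT_FF Amem[OF rx[OF a(1)] ry[OF a(2)]])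
    next
      assume a: "rep x" "\<not> rep y"
      then have "f x = (e x, False)" "f y = (e (sg y), True)" by (simp_all add: f_def)
      then show ?thesis by (simp only: AT_FT Amem[OF sy[OF a(2)] rx[OF a(1)]] key[of x y k])
    next
      assume a: "\<not> rep x" "rep y"
      then have "f x = (e (sg x), True)" "f y = (e y, False)" by (simp_all add: f_def)
      moreover have "(y, sg x) \<in> ?ZA \<longleftrightarrow> (x, y) \<in> ?ZA" using key[of y "sg x" k] by simp
      ultimately show ?thesis by (simp only: AT_TF Amem[OF ry[OF a(2)] sx[OF a(1)]])
    next
      assume a: "\<not> rep x" "\<not> rep y"
      then have "f x = (e (sg x), True)" "f y = (e (sg y), True)" by (simp_all add: f_def)
      then show ?thesis by (simp only: AT_TT Amem[OF sx[OF a(1)] sy[OF a(2)]] key2[of x y k])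
    qed
  qed
  have iso: "digraph_iso ?Z ?ZA (anti_twin_verts V) (anti_twin_arcs A)"
    unfolding digraph_iso_def by (rule exI[of _ f]) (use bij arcs in blast)
  have "card ?Z = card (anti_twin_verts V)" using bij by (rule bij_betw_same_card)
  also have "\<dots> = 2 * card V" by (simp add: anti_twin_verts_def card_cartesian_product)
  finally have "2 * card V = k * 2 ^ (k - 1)" using card_Z[of k] by simp
  moreover have "(2::nat) ^ (k - 1) = 2 * 2 ^ (k - 2)"
  proof -
    obtain m where "k = Suc (Suc m)" using assms by (metis add_2_eq_Suc le_Suc_ex)
    then show ?thesis by simp
  qed
  ultimately have "card V = k * 2 ^ (k - 2)" by simp
  then show ?thesis using og iso by (intro exI[of _ V] exI[of _ A] conjI)
qed

end
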